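(* Let $w,n,g$ be positive integers with $w\le n$, let $a$ be the remainder of $n$ divided by $w$, and suppose $ga<w$. Suppose that $r:=\binom{n}{w}/\lfloor n/w\rfloor$ and $p:=r/g$ are both integers. Suppose that there exists a $g^{*}$-good almost-regular edge-coloring of $K_n^w$ and that there exists an orthogonal array $\mathrm{OA}(w,2w-1,g)$. Then there exists a $\mathrm{TOC}_q(n,2w-1,w)$, where $q=g+1$.
   Context: $\mathcal{H}_q(n,w)$ is the set of all words of length $n$ over $\mathbb{Z}_q$ with exactly $w$ nonzero entries, with the Hamming distance. An $(n,d,w)_q$-code is a nonempty subset of $\mathcal{H}_q(n,w)$ with pairwise Hamming distances at least $d$; $A_q(n,d,w)$ is the maximum size of such a code and a code of this size is optimal. A $\mathrm{TOC}_q(n,d,w)$ is a partition of $\mathcal{H}_q(n,w)$ into optimal $(n,d,w)_q$-codes. $K_n^w$ is the complete $w$-uniform hypergraph on $[n]$. A sub-hypergraph with vertex set $[n]$ is almost-regular if any two vertex degrees differ by at most one. An almost-regular edge-coloring $\{\mathcal{F}_{i,j}:1\le i\le r/g,\,1\le j\le g\}$ of $K_n^w$ is a partition of its edges into classes, each an almost-regular sub-hypergraph on $[n]$ with exactly $\lfloor n/w\rfloor$ edges. It is $g$-good if each $\mathcal{A}_i=\bigcup_{j=1}^g\mathcal{F}_{i,j}$ is the block set of a packing $\mathrm{P}(2,w,n)$ (every pair of points in at most one edge of $\mathcal{A}_i$), and $g^{*}$-good if moreover, for each $i$, the vertex set $[n]$ can be partitioned into $w$ classes so that every edge of $\mathcal{A}_i$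 meets each class in at most one vertex (a strong $w$-coloring). An orthogonal array $\mathrm{OA}(t,k,s)$ is an $s^t\times k$ array over an $s$-symbol alphabet such that in every choice of $t$ columns each ordered $t$-tuple of symbols appears in exactly one row. *)

theory Defs
  imports Main "HOL-Library.Disjoint_Sets"
begin

definition hamming :: "nat list \<Rightarrow> nat list \<Rightarrow> nat" where
  "hamming x y = card {i. i < length x \<and> x ! i \<noteq> y ! i}"

definition Hq :: "nat \<Rightarrow> nat \<Rightarrow> nat \<Rightarrow> nat list set" where
  "Hq q n w = {x. length x = n \<and> (\<forall>i<n. x ! i < q) \<and> card {i. i < n \<and> x ! i \<noteq> 0} = w}"

definition is_code :: "nat \<Rightarrow> nat \<Rightarrow> nat \<Rightarrow> nat \<Rightarrow> nat list set \<Rightarrow> bool" where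
  "is_code q n d w C \<longleftrightarrow> C \<noteq> {} \<and> C \<subseteq> Hq q n w \<and>
     (\<forall>x\<in>C. \<forall>y\<in>C. x \<noteq> y \<longrightarrow> hamming x y \<ge> d)"

definition Aq :: "nat \<Rightarrow> nat \<Rightarrow> nat \<Rightarrow> nat \<Rightarrow> nat" where
  "Aq q n d w = Max {card C | C. is_code q n d w C}"

definition optimal_code :: "nat \<Rightarrow> nat \<Rightarrow> nat \<Rightarrow> nat \<Rightarrow> nat list set \<Rightarrow> bool" where
  "optimal_code q n d w C \<longleftrightarrow> is_code q n d w C \<and> card C = Aq q n d w"

definition is_TOC :: "nat \<Rightarrow> nat \<Rightarrow> nat \<Rightarrow> nat \<Rightarrow> nat list set set \<Rightarrow> bool" where
  "is_TOC q n d w P \<longleftrightarrow> partition_on (Hq q n w) P \<and> (\<forall>C\<in>P. optimal_code q n d w C)"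

definition Knw_edges :: "nat \<Rightarrow> nat \<Rightarrow> nat set set" where
  "Knw_edges n w = {e. e \<subseteq> {1..n} \<and> card e = w}"

definition hdeg :: "nat set set \<Rightarrow> nat \<Rightarrow> nat" where
  "hdeg F v = card {e \<in> F. v \<in> e}"

definition almost_regular :: "nat \<Rightarrow> nat set set \<Rightarrow> bool" where
  "almost_regular n F \<longleftrightarrow>
     (\<forall>u\<in>{1..n}. \<forall>v\<in>{1..n}. hdeg F u \<le> hdeg F v + 1)"

definition almost_regular_coloring ::
  "nat \<Rightarrow> nat \<Rightarrow> nat \<Rightarrow> nat \<Rightarrow> (nat \<Rightarrow> nat \<Rightarrow> nat set set) \<Rightarrow> bool" where
  "almost_regular_coloring n w p g F \<longleftrightarrow>
     (\<Union>i\<in>{1..p}. \<Union>j\<in>{1..g}. F i j) = Knw_edges n w \<and>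
     (\<forall>i\<in>{1..p}. \<forall>j\<in>{1..g}. \<forall>i'\<in>{1..p}. \<forall>j'\<in>{1..g}.
         (i, j) \<noteq> (i', j') \<longrightarrow> F i j \<inter> F i' j' = {}) \<and>
     (\<forall>i\<in>{1..p}. \<forall>j\<in>{1..g}.
         F i j \<subseteq> Knw_edges n w \<and> almost_regular n (F i j) \<and> card (F i j) = n div w)"

definition is_packing :: "nat set set \<Rightarrow> bool" where
  "is_packing A \<longleftrightarrow> (\<forall>x y. x \<noteq> y \<longrightarrow> card {e \<in> A. x \<in> e \<and> y \<in> e} \<le> 1)"

definition strong_coloring :: "nat \<Rightarrow> nat \<Rightarrow> nat set set \<Rightarrow> bool" where
  "strong_coloring n w A \<longleftrightarrow>
     (\<exists>P. partition_on {1..n} P \<and> card P = w \<and> (\<forall>e\<in>A. \<forall>B\<in>P. card (e \<inter> B) \<le> 1))"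

definition g_star_good ::
  "nat \<Rightarrow> nat \<Rightarrow> nat \<Rightarrow> nat \<Rightarrow> (nat \<Rightarrow> nat \<Rightarrow> nat set set) \<Rightarrow> bool" where
  "g_star_good n w p g F \<longleftrightarrow>
     almost_regular_coloring n w p g F \<and>
     (\<forall>i\<in>{1..p}. is_packing (\<Union>j\<in>{1..g}. F i j) \<and>
                  strong_coloring n w (\<Union>j\<in>{1..g}. F i j))"

definition is_OA :: "nat \<Rightarrow> nat \<Rightarrow> nat \<Rightarrow> (nat \<Rightarrow> nat \<Rightarrow> nat) \<Rightarrow> bool" where
  "is_OA t k s M \<longleftrightarrow>
     (\<forall>\<rho><s ^ t. \<forall>c<k. M \<rho> c < s) \<and>
     (\<forall>T. T \<subseteq> {..<k} \<and> card T = t \<longrightarrow>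
        (\<forall>f. (\<forall>c\<in>T. f c < s) \<longrightarrow> (\<exists>!\<rho>. \<rho> < s ^ t \<and> (\<forall>c\<in>T. M \<rho> c = f c))))"

end

theory Submission
  imports Defs
begin



lemma card_filter_sum: "finite A \<Longrightarrow> card {x\<in>A. P x} = (\<Sum>x\<in>A. if P x then 1 else 0::nat)"
  by (simp add: sum.If_cases Int_def)

lemma finite_Hq: "finite (Hq q n w)"
proof -
  have "Hq q n w \<subseteq> {xs. set xs \<subseteq> {..<q} \<and> length xs = n}"
    by (auto simp: Hq_def in_set_conv_nth)
  moreover have "finite {xs. set xs \<subseteq> {..<q} \<and> length xs = n}"
    by (rule finite_lists_length_eq) simp
  ultimately show ?thesis by (rule finite_subset)
qed

lemma hamming_upper:
  assumes x: "x \<in> Hq q n w" and y: "y \<in> Hq q n w" and k: "k < n"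
    and eq: "x ! k = y ! k" and nz: "x ! k \<noteq> 0"
  shows "hamming x y \<le> 2 * w - 2"
proof -
  define Sx where "Sx = {i. i < n \<and> x ! i \<noteq> 0}"
  define Sy where "Sy = {i. i < n \<and> y ! i \<noteq> 0}"
  have lx: "length x = n" and cx: "card Sx = w" using x by (auto simp: Hq_def Sx_def)
  have cy: "card Sy = w" using y by (auto simp: Hq_def Sy_def)
  have fin: "finite Sx" "finite Sy" by (auto simp: Sx_def Sy_def)
  have sub: "{i. i < length x \<and> x ! i \<noteq> y ! i} \<subseteq> (Sx \<union> Sy) - {k}"
    using lx eq by (auto simp: Sx_def Sy_def)
  have kin: "k \<in> Sx \<inter> Sy" using k eq nz by (auto simp: Sx_def Sy_def)
  have "card (Sx \<inter> Sy) \<ge> 1" using kin fin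
    by (metis One_nat_def Suc_leI card_gt_0_iff empty_iff finite_Int)
  moreover have "card (Sx \<union> Sy) + card (Sx \<inter> Sy) = card Sx + card Sy"
    using card_Un_Int[OF fin] by simp
  ultimately have "card (Sx \<union> Sy) \<le> 2 * w - 1" using cx cy by linarith
  moreover have "card ((Sx \<union> Sy) - {k}) = card (Sx \<union> Sy) - 1"
    using kin fin by (simp add: card_Diff_singleton)
  ultimately have "card ((Sx \<union> Sy) - {k}) \<le> 2 * w - 2" by linarith
  moreover have "card {i. i < length x \<and> x ! i \<noteq> y ! i} \<le> card ((Sx \<union> Sy) - {k})"
    using sub fin by (intro card_mono) auto
  ultimately show ?thesis unfolding hamming_def by linarith
qed

lemma code_bound_mult:
  assumes C: "is_code (g + 1) n (2 * w - 1) w C" and w: "0 < w"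
  shows "card C * w \<le> n * g"
proof -
  have CH: "C \<subseteq> Hq (g+1) n w" and dist: "\<forall>x\<in>C. \<forall>y\<in>C. x \<noteq> y \<longrightarrow> hamming x y \<ge> 2*w-1"
    using C by (auto simp: is_code_def)
  have finC: "finite C" using CH finite_Hq finite_subset by blast
  have each: "card {x\<in>C. x ! k \<noteq> 0} \<le> g" if k: "k < n" for k
  proof -
    have "inj_on (\<lambda>x. x ! k) {x\<in>C. x ! k \<noteq> 0}"
    proof (rule inj_onI)
      fix x y assume "x \<in> {x\<in>C. x ! k \<noteq> 0}" "y \<in> {x\<in>C. x ! k \<noteq> 0}" "x ! k = y ! k"
      then have "x \<in> C" "y \<in> C" "x ! k \<noteq> 0" "x ! k = y ! k" by auto
      show "x = y"
      proof (rule ccontr)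
        assume "x \<noteq> y"
        then have "hamming x y \<ge> 2*w-1" using dist \<open>x\<in>C\<close> \<open>y\<in>C\<close> by blast
        moreover have "hamming x y \<le> 2*w-2"
          using hamming_upper[of x "g+1" n w y k] \<open>x\<in>C\<close> \<open>y\<in>C\<close> CH k \<open>x ! k \<noteq> 0\<close> \<open>x ! k = y ! k\<close> by blast
        ultimately show False using w by linarith
      qed
    qed
    moreover have "(\<lambda>x. x ! k) ` {x\<in>C. x ! k \<noteq> 0} \<subseteq> {1..g}"
      using CH k by (force simp: Hq_def)
    ultimately have "card {x\<in>C. x ! k \<noteq> 0} \<le> card {1..g}"
      by (metis card_inj_on_le finite_atLeastAtMost)
    then show ?thesis by simp
  qed
  have "card C * w = (\<Sum>x\<in>C. card {k\<in>{..<n}. x ! k \<noteq> 0})"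
  proof -
    have "\<And>x. x \<in> C \<Longrightarrow> card {k\<in>{..<n}. x ! k \<noteq> 0} = w"
      using CH by (auto simp: Hq_def)
    then show ?thesis by simp
  qed
  also have "\<dots> = (\<Sum>x\<in>C. \<Sum>k<n. if x ! k \<noteq> 0 then 1 else 0)"
    by (intro sum.cong refl card_filter_sum) simp
  also have "\<dots> = (\<Sum>k<n. \<Sum>x\<in>C. if x ! k \<noteq> 0 then 1 else 0)"
    by (rule sum.swap)
  also have "\<dots> = (\<Sum>k<n. card {x\<in>C. x ! k \<noteq> 0})"
    using finC by (simp add: card_filter_sum)
  also have "\<dots> \<le> (\<Sum>k<n. g)" by (rule sum_mono) (use each in auto)
  finally show ?thesis by simp
qed

lemma code_bound:
  assumes C: "is_code (g + 1) n (2 * w - 1) w C" and w: "0 < w" and a: "g * (n mod w) < w"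
  shows "card C \<le> g * (n div w)"
proof -
  have "card C * w \<le> n * g" by (rule code_bound_mult[OF C w])
  also have "n * g = g * (n div w) * w + g * (n mod w)"
    by (metis add_mult_distrib2 div_mult_mod_eq mult.assoc mult.commute)
  finally have "card C * w < (g * (n div w) + 1) * w" using a by (simp add: algebra_simps)
  then have "card C < g * (n div w) + 1" using mult_less_cancel2 by blast
  then show ?thesis by simp
qed

lemma ar_disjoint:
  assumes FK: "F \<subseteq> Knw_edges n w" and ar: "almost_regular n F" and cF: "card F = n div w"
    and w: "0 < w" and wn: "w \<le> n" and e: "e \<in> F" and e': "e' \<in> F" and ne: "e \<noteq> e'"
  shows "e \<inter> e' = {}"
proof (rule ccontr)
  assume "e \<inter> e' \<noteq> {}"
  then obtain v where v: "v \<in> e" "v \<in> e'" by blast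
  have m1: "n div w \<ge> 1" using w wn by (simp add: div_le_mono[of w n w, simplified] Suc_le_eq div_greater_zero_iff)
  then have finF: "finite F" using cF by (metis card.infinite not_one_le_zero)
  have "e \<subseteq> {1..n}" using FK e by (auto simp: Knw_edges_def)
  then have vn: "v \<in> {1..n}" using v by blast
  have "{e, e'} \<subseteq> {x \<in> F. v \<in> x}" using e e' v by auto
  then have "card {e, e'} \<le> hdeg F v" unfolding hdeg_def by (intro card_mono) (use finF in auto)
  then have dv: "hdeg F v \<ge> 2" using ne by simp
  have du: "hdeg F u \<ge> 1" if "u \<in> {1..n}" for u
    using ar that vn dv unfolding almost_regular_def by fastforce
  have "(\<Sum>u\<in>{1..n}. hdeg F u) = (\<Sum>u\<in>{1..n}. \<Sum>x\<in>F. if u \<in> x then 1 else 0)"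
    unfolding hdeg_def using finF by (simp add: card_filter_sum)
  also have "\<dots> = (\<Sum>x\<in>F. \<Sum>u\<in>{1..n}. if u \<in> x then 1 else 0)" by (rule sum.swap)
  also have "\<dots> = (\<Sum>x\<in>F. card {u\<in>{1..n}. u \<in> x})"
    by (intro sum.cong refl card_filter_sum[symmetric]) simp
  also have "\<dots> = (\<Sum>x\<in>F. w)"
  proof (rule sum.cong)
    fix x assume "x \<in> F"
    then have "x \<subseteq> {1..n}" "card x = w" using FK by (auto simp: Knw_edges_def)
    then have "{u\<in>{1..n}. u \<in> x} = x" by auto
    then show "card {u\<in>{1..n}. u \<in> x} = w" using \<open>card x = w\<close> by simp
  qed simp
  also have "\<dots> = (n div w) * w" using cF by simp
  also have "\<dots> \<le> n" by simp
  finally have le: "(\<Sum>u\<in>{1..n}. hdeg F u) \<le> n" .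
  have "(\<Sum>u\<in>{1..n}. hdeg F u) = hdeg F v + (\<Sum>u\<in>{1..n} - {v}. hdeg F u)"
    using vn by (simp add: sum.remove)
  moreover have "(\<Sum>u\<in>{1..n} - {v}. hdeg F u) \<ge> (\<Sum>u\<in>{1..n} - {v}. 1)"
    by (rule sum_mono) (use du in auto)
  moreover have "(\<Sum>u\<in>{1..n} - {v}. (1::nat)) = n - 1" using vn by simp
  ultimately have "(\<Sum>u\<in>{1..n}. hdeg F u) \<ge> n + 1" using dv vn by auto
  then show False using le by linarith
qed




lemma supp_card: "e \<subseteq> {1..n} \<Longrightarrow> card {k. k < n \<and> Suc k \<in> e} = card e"
proof -
  assume e: "e \<subseteq> {1..n}"
  have "Suc ` {k. k < n \<and> Suc k \<in> e} = e"
  proof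
    show "e \<subseteq> Suc ` {k. k < n \<and> Suc k \<in> e}"
    proof
      fix v assume "v \<in> e"
      then have "v \<ge> 1" "v \<le> n" using e by auto
      then have "v = Suc (v - 1)" "v - 1 < n" by auto
      then show "v \<in> Suc ` {k. k < n \<and> Suc k \<in> e}" using \<open>v \<in> e\<close> by (metis (mono_tags, lifting) image_eqI mem_Collect_eq)
    qed
  qed auto
  then show ?thesis by (metis card_image inj_Suc inj_on_subset subset_UNIV)
qed

lemma mod_cancel: "(a::nat) < g \<Longrightarrow> b < g \<Longrightarrow> (a + j) mod g = (b + j) mod g \<Longrightarrow> a = b"
proof -
  assume a: "a < g" and b: "b < g" and h: "(a + j) mod g = (b + j) mod g"
  have "int a mod int g = int b mod int g"
  proof -
    have "(int a + int j) mod int g = (int b + int j) mod int g" using h by (metis of_nat_add zmod_int)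
    then have "(int a + int j - int j) mod int g = (int b + int j - int j) mod int g"
      by (metis mod_diff_left_eq)
    then show ?thesis by simp
  qed
  then show ?thesis using a b by simp
qed

lemma j_cancel: "j \<in> {1..g} \<Longrightarrow> j' \<in> {1..g} \<Longrightarrow> ((a::nat) + j) mod g = (a + j') mod g \<Longrightarrow> j = j'"
proof -
  assume j: "j \<in> {1..g}" and j': "j' \<in> {1..g}" and h: "(a + j) mod g = (a + j') mod g"
  have g: "g > 0" using j by auto
  have "(j mod g + a) mod g = (j' mod g + a) mod g" using h by (metis mod_add_left_eq add.commute)
  then have "j mod g = j' mod g" using mod_cancel[of "j mod g" g "j' mod g" a] g by simp
  then show ?thesis using j j'
    by (metis atLeastAtMost_iff le_neq_implies_less mod_less mod_self nat_less_le not_one_le_zero)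
qed

lemma hamming_lower:
  assumes lx: "length x = n" and ly: "length y = n"
    and sx: "\<And>k. k < n \<Longrightarrow> (x ! k \<noteq> 0) = (Suc k \<in> e)"
    and sy: "\<And>k. k < n \<Longrightarrow> (y ! k \<noteq> 0) = (Suc k \<in> e')"
    and df: "\<And>k. k < n \<Longrightarrow> Suc k \<in> e \<Longrightarrow> Suc k \<in> e' \<Longrightarrow> x ! k \<noteq> y ! k"
    and e: "e \<subseteq> {1..n}" and e': "e' \<subseteq> {1..n}"
  shows "hamming x y \<ge> card (e \<union> e')"
proof -
  have "card (e \<union> e') = card {k. k < n \<and> Suc k \<in> e \<union> e'}"
    using supp_card[of "e \<union> e'" n] e e' by simp
  also have "\<dots> \<le> card {i. i < length x \<and> x ! i \<noteq> y ! i}"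
  proof (rule card_mono)
    show "finite {i. i < length x \<and> x ! i \<noteq> y ! i}" by simp
    show "{k. k < n \<and> Suc k \<in> e \<union> e'} \<subseteq> {i. i < length x \<and> x ! i \<noteq> y ! i}"
    proof
      fix k assume "k \<in> {k. k < n \<and> Suc k \<in> e \<union> e'}"
      then have k: "k < n" "Suc k \<in> e \<union> e'" by auto
      show "k \<in> {i. i < length x \<and> x ! i \<noteq> y ! i}"
        using k sx[OF k(1)] sy[OF k(1)] df[OF k(1)] lx by auto
    qed
  qed
  finally show ?thesis unfolding hamming_def .
qed




locale cons =
  fixes n w g p :: nat and F :: "nat \<Rightarrow> nat \<Rightarrow> nat set set" and col :: "nat \<Rightarrow> nat \<Rightarrow> nat"
  assumes w0: "0 < w" and g0: "0 < g" and wn: "w \<le> n"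
    and arc: "almost_regular_coloring n w p g F"
    and pack: "\<forall>i\<in>{1..p}. is_packing (\<Union>j\<in>{1..g}. F i j)"
    and colb: "\<forall>i\<in>{1..p}. \<forall>j\<in>{1..g}. \<forall>e\<in>F i j. bij_betw (col i) e {0..<w}"
begin

definition wd :: "nat \<Rightarrow> nat set \<Rightarrow> nat \<Rightarrow> nat list \<Rightarrow> nat list" where
  "wd i e j \<rho> = map (\<lambda>k. if Suc k \<in> e then (\<rho> ! col i (Suc k) + j) mod g + 1 else 0) [0..<n]"

definition Code :: "nat \<Rightarrow> nat list \<Rightarrow> nat list set" where
  "Code i \<rho> = (\<lambda>(j, e). wd i e j \<rho>) ` Sigma {1..g} (F i)"

definition R :: "nat list set" where
  "R = {\<rho>. length \<rho> = w \<and> (\<forall>c<w. \<rho> ! c < g)}"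

definition TOC :: "nat list set set" where
  "TOC = (\<lambda>(i, \<rho>). Code i \<rho>) ` ({1..p} \<times> R)"

lemma FK: "i \<in> {1..p} \<Longrightarrow> j \<in> {1..g} \<Longrightarrow> e \<in> F i j \<Longrightarrow> e \<subseteq> {1..n} \<and> card e = w \<and> finite e"
proof -
  assume i: "i \<in> {1..p}" and j: "j \<in> {1..g}" and e: "e \<in> F i j"
  have "F i j \<subseteq> Knw_edges n w" using arc i j unfolding almost_regular_coloring_def by blast
  then have "e \<subseteq> {1..n}" "card e = w" using e unfolding Knw_edges_def by auto
  then show ?thesis using w0 by (metis card.infinite less_irrefl)
qed

lemma Fdisj: "i \<in> {1..p} \<Longrightarrow> j \<in> {1..g} \<Longrightarrow> i' \<in> {1..p} \<Longrightarrow> j' \<in> {1..g} \<Longrightarrow>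
   e \<in> F i j \<Longrightarrow> e \<in> F i' j' \<Longrightarrow> i = i' \<and> j = j'"
  using arc unfolding almost_regular_coloring_def by blast

lemma m1: "n div w \<ge> 1"
  using w0 wn by (simp add: div_greater_zero_iff Suc_le_eq)

lemma Fcard: "i \<in> {1..p} \<Longrightarrow> j \<in> {1..g} \<Longrightarrow> card (F i j) = n div w"
  using arc unfolding almost_regular_coloring_def by blast

lemma Ffin: "i \<in> {1..p} \<Longrightarrow> j \<in> {1..g} \<Longrightarrow> finite (F i j) \<and> F i j \<noteq> {}"
  using Fcard m1 by (metis card.empty card.infinite not_one_le_zero)

lemma Fsame: "i \<in> {1..p} \<Longrightarrow> j \<in> {1..g} \<Longrightarrow> e \<in> F i j \<Longrightarrow> e' \<in> F i j \<Longrightarrow> e \<noteq> e' \<Longrightarrow> e \<inter> e' = {}"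
proof -
  assume i: "i \<in> {1..p}" and j: "j \<in> {1..g}" and e: "e \<in> F i j" and e': "e' \<in> F i j" and ne: "e \<noteq> e'"
  have "F i j \<subseteq> Knw_edges n w" "almost_regular n (F i j)" "card (F i j) = n div w"
    using arc i j unfolding almost_regular_coloring_def by blast+
  then show ?thesis using ar_disjoint[of "F i j" n w e e'] w0 wn e e' ne by blast
qed

lemma Fpack: "i \<in> {1..p} \<Longrightarrow> j \<in> {1..g} \<Longrightarrow> j' \<in> {1..g} \<Longrightarrow> e \<in> F i j \<Longrightarrow> e' \<in> F i j' \<Longrightarrow> e \<noteq> e'
   \<Longrightarrow> card (e \<inter> e') \<le> 1"
proof (rule ccontr)
  assume i: "i \<in> {1..p}" and j: "j \<in> {1..g}" and j': "j' \<in> {1..g}" and e: "e \<in> F i j"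
    and e': "e' \<in> F i j'" and ne: "e \<noteq> e'" and c: "\<not> card (e \<inter> e') \<le> 1"
  have "finite e" using FK i j e by blast
  then obtain u v where uv: "u \<in> e \<inter> e'" "v \<in> e \<inter> e'" "u \<noteq> v" using c
    by (metis One_nat_def card_le_Suc0_iff_eq finite_Int not_less_eq_eq)
  let ?A = "\<Union>j\<in>{1..g}. F i j"
  have finA: "finite ?A" using Ffin i by auto
  have "{e, e'} \<subseteq> {x \<in> ?A. u \<in> x \<and> v \<in> x}" using uv e e' j j' by auto
  then have "card {e, e'} \<le> card {x \<in> ?A. u \<in> x \<and> v \<in> x}" using finA by (intro card_mono) auto
  moreover have "card {x \<in> ?A. u \<in> x \<and> v \<in> x} \<le> 1" using pack i uv(3) unfolding is_packing_def by blast
  ultimately show False using ne by simp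
qed

lemma wd_len[simp]: "length (wd i e j \<rho>) = n" by (simp add: wd_def)

lemma wd_nth: "k < n \<Longrightarrow> wd i e j \<rho> ! k = (if Suc k \<in> e then (\<rho> ! col i (Suc k) + j) mod g + 1 else 0)"
  by (simp add: wd_def)

lemma wd_nz: "k < n \<Longrightarrow> (wd i e j \<rho> ! k \<noteq> 0) = (Suc k \<in> e)"
  by (simp add: wd_nth)

lemma wd_Hq: "e \<subseteq> {1..n} \<Longrightarrow> card e = w \<Longrightarrow> wd i e j \<rho> \<in> Hq (g + 1) n w"
proof -
  assume e: "e \<subseteq> {1..n}" "card e = w"
  have "{k. k < n \<and> wd i e j \<rho> ! k \<noteq> 0} = {k. k < n \<and> Suc k \<in> e}" using wd_nz by auto
  then have "card {k. k < n \<and> wd i e j \<rho> ! k \<noteq> 0} = w" using supp_card[OF e(1)] e(2) by simp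
  moreover have "\<forall>k<n. wd i e j \<rho> ! k < g + 1" using g0 by (simp add: wd_nth)
  ultimately show ?thesis by (simp add: Hq_def)
qed

lemma wd_supp: "e \<subseteq> {1..n} \<Longrightarrow> e = Suc ` {k. k < n \<and> wd i e j \<rho> ! k \<noteq> 0}"
proof -
  assume e: "e \<subseteq> {1..n}"
  have "Suc ` {k. k < n \<and> Suc k \<in> e} = e"
  proof
    show "e \<subseteq> Suc ` {k. k < n \<and> Suc k \<in> e}"
    proof
      fix v assume "v \<in> e"
      then have "v \<ge> 1" "v \<le> n" using e by auto
      then have "v = Suc (v - 1)" "v - 1 < n" by auto
      then show "v \<in> Suc ` {k. k < n \<and> Suc k \<in> e}" using \<open>v \<in> e\<close> by (metis (mono_tags, lifting) image_eqI mem_Collect_eq)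
    qed
  qed auto
  moreover have "{k. k < n \<and> wd i e j \<rho> ! k \<noteq> 0} = {k. k < n \<and> Suc k \<in> e}" using wd_nz by auto
  ultimately show ?thesis by simp
qed

lemma wd_eq_e: "e \<subseteq> {1..n} \<Longrightarrow> e' \<subseteq> {1..n} \<Longrightarrow> wd i e j \<rho> = wd i' e' j' \<rho>' \<Longrightarrow> e = e'"
  by (metis wd_supp)

lemma wd_dist:
  assumes i: "i \<in> {1..p}" and j: "j \<in> {1..g}" and j': "j' \<in> {1..g}"
    and e: "e \<in> F i j" and e': "e' \<in> F i j'" and ne: "(j, e) \<noteq> (j', e')"
  shows "hamming (wd i e j \<rho>) (wd i e' j' \<rho>) \<ge> 2 * w - 1"
proof -
  have E: "e \<subseteq> {1..n}" "card e = w" "finite e" using FK i j e by auto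
  have E': "e' \<subseteq> {1..n}" "card e' = w" "finite e'" using FK i j' e' by auto
  have ee: "e \<noteq> e'"
  proof
    assume "e = e'"
    then have "j = j'" using Fdisj[OF i j i j' e] e' by blast
    then show False using ne \<open>e = e'\<close> by simp
  qed
  have ci: "card (e \<inter> e') \<le> 1" using Fpack[OF i j j' e e' ee] .
  have h: "hamming (wd i e j \<rho>) (wd i e' j' \<rho>) \<ge> card (e \<union> e')"
  proof (rule hamming_lower[OF wd_len wd_len wd_nz wd_nz _ E(1) E'(1)])
    fix k assume k: "k < n" "Suc k \<in> e" "Suc k \<in> e'"
    show "wd i e j \<rho> ! k \<noteq> wd i e' j' \<rho> ! k"
    proof (cases "j = j'")
      case True
      then have "e \<inter> e' = {}" using Fsame[OF i j e] e' ee by simp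
      then show ?thesis using k by auto
    next
      case False
      then show ?thesis using k j j' j_cancel[of j g j' "\<rho> ! col i (Suc k)"] by (auto simp: wd_nth)
    qed
  qed
  have "card (e \<union> e') + card (e \<inter> e') = card e + card e'" using card_Un_Int E(3) E'(3) by metis
  then have "card (e \<union> e') \<ge> 2 * w - 1" using ci E(2) E'(2) by linarith
  then show ?thesis using h by linarith
qed

lemma Code_inj: "i \<in> {1..p} \<Longrightarrow> inj_on (\<lambda>(j, e). wd i e j \<rho>) (Sigma {1..g} (F i))"
proof (rule inj_onI)
  fix a b assume i: "i \<in> {1..p}" and a: "a \<in> Sigma {1..g} (F i)" and b: "b \<in> Sigma {1..g} (F i)"
    and eq0: "(\<lambda>(j, e). wd i e j \<rho>) a = (\<lambda>(j, e). wd i e j \<rho>) b"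
  obtain j e where a': "a = (j, e)" by fastforce
  obtain j' e' where b': "b = (j', e')" by fastforce
  have j: "j \<in> {1..g}" "e \<in> F i j" using a a' by auto
  have j': "j' \<in> {1..g}" "e' \<in> F i j'" using b b' by auto
  have eq: "wd i e j \<rho> = wd i e' j' \<rho>" using eq0 a' b' by simp
  have "e = e'" using wd_eq_e[OF _ _ eq] FK i j j' by blast
  then have "j = j'" using Fdisj[OF i j(1) i j'(1) j(2)] j' by blast
  then show "a = b" using a' b' \<open>e = e'\<close> by simp
qed

lemma Code_card: "i \<in> {1..p} \<Longrightarrow> card (Code i \<rho>) = g * (n div w)"
proof -
  assume i: "i \<in> {1..p}"
  have "card (Code i \<rho>) = card (Sigma {1..g} (F i))"
    unfolding Code_def using Code_inj[OF i] by (rule card_image)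
  also have "\<dots> = (\<Sum>j\<in>{1..g}. card (F i j))" using Ffin i by (simp add: card_SigmaI)
  also have "\<dots> = g * (n div w)" using Fcard i by simp
  finally show ?thesis .
qed

lemma Code_is_code: "i \<in> {1..p} \<Longrightarrow> is_code (g + 1) n (2 * w - 1) w (Code i \<rho>)"
proof -
  assume i: "i \<in> {1..p}"
  have "Code i \<rho> \<noteq> {}" using Code_card[OF i] m1 g0 by (metis card.empty mult_is_0 not_one_le_zero zero_less_iff_neq_zero)
  moreover have "Code i \<rho> \<subseteq> Hq (g+1) n w"
  proof
    fix x assume "x \<in> Code i \<rho>"
    then obtain j e where x: "x = wd i e j \<rho>" "j \<in> {1..g}" "e \<in> F i j" unfolding Code_def by auto
    then show "x \<in> Hq (g+1) n w" using FK[OF i x(2) x(3)] wd_Hq by blast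
  qed
  moreover have "\<forall>x\<in>Code i \<rho>. \<forall>y\<in>Code i \<rho>. x \<noteq> y \<longrightarrow> hamming x y \<ge> 2 * w - 1"
  proof (intro ballI impI)
    fix x y assume "x \<in> Code i \<rho>" "y \<in> Code i \<rho>" "x \<noteq> y"
    then obtain j e j' e' where x: "x = wd i e j \<rho>" "j \<in> {1..g}" "e \<in> F i j"
      and y: "y = wd i e' j' \<rho>" "j' \<in> {1..g}" "e' \<in> F i j'" unfolding Code_def by auto
    have "(j, e) \<noteq> (j', e')" using x y \<open>x \<noteq> y\<close> by auto
    then show "hamming x y \<ge> 2 * w - 1" using wd_dist[OF i x(2) y(2) x(3) y(3)] x y by simp
  qed
  ultimately show ?thesis unfolding is_code_def by blast
qed

end



lemma arith_back: "1 \<le> (a::nat) \<Longrightarrow> a \<le> g \<Longrightarrow> j \<le> g \<Longrightarrow> ((a - 1 + (g - j)) mod g + j) mod g + 1 = a"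
proof -
  assume h: "1 \<le> a" "a \<le> g" "j \<le> g"
  have "((a - 1 + (g - j)) mod g + j) mod g = (a - 1 + (g - j) + j) mod g" by (simp add: mod_add_left_eq)
  also have "a - 1 + (g - j) + j = (a - 1) + g" using h by simp
  also have "((a - 1) + g) mod g = (a - 1) mod g" by (rule mod_add_self2)
  also have "(a - 1) mod g = a - 1" using h by simp
  finally show ?thesis using h by simp
qed

context cons begin

lemma p1: "1 \<le> p"
proof (rule ccontr)
  assume "\<not> 1 \<le> p"
  then have "p = 0" by simp
  then have "Knw_edges n w = {}" using arc unfolding almost_regular_coloring_def by simp
  moreover have "{1..w} \<in> Knw_edges n w" using wn unfolding Knw_edges_def by auto
  ultimately show False by simp
qed

lemma Aq_val: assumes a: "g * (n mod w) < w" shows "Aq (g + 1) n (2 * w - 1) w = g * (n div w)"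
proof -
  let ?S = "{card C | C. is_code (g + 1) n (2 * w - 1) w C}"
  have ub: "\<forall>s\<in>?S. s \<le> g * (n div w)" using code_bound[OF _ w0 a] by blast
  have "1 \<in> {1..p}" using p1 by simp
  then have "is_code (g + 1) n (2 * w - 1) w (Code 1 []) \<and> g * (n div w) = card (Code 1 [])"
    using Code_is_code[of 1 "[]"] Code_card[of 1 "[]"] by simp
  then have "g * (n div w) \<in> ?S" by blast
  moreover have "finite ?S" using ub by (meson finite_atMost finite_subset atMost_iff subsetI)
  ultimately show ?thesis unfolding Aq_def using ub by (intro Max_eqI) auto
qed

lemma cover: assumes x: "x \<in> Hq (g + 1) n w" shows "\<exists>i\<in>{1..p}. \<exists>\<rho>\<in>R. x \<in> Code i \<rho>"
proof -
  have lx: "length x = n" and xr: "\<forall>k<n. x ! k < g + 1" and cx: "card {k. k < n \<and> x ! k \<noteq> 0} = w"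
    using x by (auto simp: Hq_def)
  define e where "e = Suc ` {k. k < n \<and> x ! k \<noteq> 0}"
  have esub: "e \<subseteq> {1..n}" unfolding e_def by auto
  have ce: "card e = w" unfolding e_def using cx by (simp add: card_image)
  have eK: "e \<in> Knw_edges n w" using esub ce by (simp add: Knw_edges_def)
  have U: "(\<Union>i\<in>{1..p}. \<Union>j\<in>{1..g}. F i j) = Knw_edges n w"
    using arc unfolding almost_regular_coloring_def by (rule conjunct1)
  obtain i j where i: "i \<in> {1..p}" and j: "j \<in> {1..g}" and ej: "e \<in> F i j"
    using eK unfolding U[symmetric] by blast
  have bij: "bij_betw (col i) e {0..<w}" using colb i j ej by blast
  define inv where "inv = the_inv_into e (col i)"
  define \<rho> where "\<rho> = map (\<lambda>c. (x ! (inv c - 1) - 1 + (g - j)) mod g) [0..<w]"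
  have \<rho>R: "\<rho> \<in> R" unfolding R_def \<rho>_def using g0 by auto
  have ek: "Suc k \<in> e \<longleftrightarrow> x ! k \<noteq> 0" if "k < n" for k
    using that unfolding e_def by auto
  have "wd i e j \<rho> = x"
  proof (rule nth_equalityI)
    show "length (wd i e j \<rho>) = length x" using lx by simp
    fix k assume "k < length (wd i e j \<rho>)"
    then have k: "k < n" by simp
    show "wd i e j \<rho> ! k = x ! k"
    proof (cases "Suc k \<in> e")
      case True
      have c: "col i (Suc k) < w" using bij True by (auto simp: bij_betw_def)
      have "inv (col i (Suc k)) = Suc k" unfolding inv_def
        using bij True by (simp add: bij_betw_def the_inv_into_f_f)
      then have "\<rho> ! col i (Suc k) = (x ! k - 1 + (g - j)) mod g" unfolding \<rho>_def using c by simp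
      moreover have "1 \<le> x ! k" "x ! k \<le> g" using ek[OF k] True xr k by auto
      ultimately show ?thesis using True k j arith_back[of "x ! k" g j] by (simp add: wd_nth)
    next
      case False
      then show ?thesis using ek[OF k] k by (simp add: wd_nth)
    qed
  qed
  then have "x \<in> Code i \<rho>" unfolding Code_def using j ej by (metis (no_types, lifting) SigmaI case_prod_conv image_eqI)
  then show ?thesis using i \<rho>R by blast
qed

lemma Code_unique:
  assumes i: "i \<in> {1..p}" and i': "i' \<in> {1..p}" and r: "\<rho> \<in> R" and r': "\<rho>' \<in> R"
    and x: "x \<in> Code i \<rho>" and x': "x \<in> Code i' \<rho>'"
  shows "i = i' \<and> \<rho> = \<rho>'"
proof -
  obtain j e where je: "j \<in> {1..g}" "e \<in> F i j" "x = wd i e j \<rho>" using x unfolding Code_def by auto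
  obtain j' e' where je': "j' \<in> {1..g}" "e' \<in> F i' j'" "x = wd i' e' j' \<rho>'" using x' unfolding Code_def by auto
  have "e = e'" using wd_eq_e[of e e' i j \<rho> i' j' \<rho>'] FK[OF i je(1,2)] FK[OF i' je'(1,2)] je(3) je'(3) by simp
  then have ii: "i = i'" and jj: "j = j'" using Fdisj[OF i je(1) i' je'(1) je(2)] je'(2) by auto
  have bij: "bij_betw (col i) e {0..<w}" using colb i je by blast
  have "\<rho> = \<rho>'"
  proof (rule nth_equalityI)
    show "length \<rho> = length \<rho>'" using r r' by (simp add: R_def)
    fix c assume "c < length \<rho>"
    then have c: "c < w" using r by (simp add: R_def)
    then have "c \<in> col i ` e" using bij_betw_imp_surj_on[OF bij] by simp
    then obtain v where v: "v \<in> e" "col i v = c" by blast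
    have "v \<in> {1..n}" using FK[OF i je(1,2)] v by blast
    then have k: "v = Suc (v - 1)" "v - 1 < n" by auto
    define k where "k = v - 1"
    have kk: "Suc k \<in> e" "k < n" "col i (Suc k) = c" using k v unfolding k_def by simp_all
    have "wd i e j \<rho> ! k = wd i' e' j' \<rho>' ! k" using je(3) je'(3) by simp
    then have "wd i e j \<rho> ! k = wd i e j \<rho>' ! k" using \<open>e = e'\<close> ii jj by simp
    then have eqm: "(\<rho> ! c + j) mod g = (\<rho>' ! c + j) mod g"
      using wd_nth[OF kk(2), of i e j] kk(1,3) by simp
    have lt: "\<rho> ! c < g" "\<rho>' ! c < g" using r r' c by (auto simp: R_def)
    show "\<rho> ! c = \<rho>' ! c" using mod_cancel[OF lt eqm] .
  qed
  then show ?thesis using ii by simp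
qed

lemma TOC_ok: assumes a: "g * (n mod w) < w" shows "is_TOC (g + 1) n (2 * w - 1) w TOC"
proof -
  have U: "\<Union>TOC = Hq (g + 1) n w"
  proof
    show "\<Union>TOC \<subseteq> Hq (g + 1) n w"
    proof
      fix x assume "x \<in> \<Union>TOC"
      then obtain i \<rho> where "i \<in> {1..p}" "x \<in> Code i \<rho>" unfolding TOC_def by auto
      then show "x \<in> Hq (g + 1) n w" using Code_is_code[of i \<rho>] unfolding is_code_def by blast
    qed
    show "Hq (g + 1) n w \<subseteq> \<Union>TOC" unfolding TOC_def using cover by fastforce
  qed
  have Dj: "disjoint TOC"
  proof (rule disjointI)
    fix a b assume a: "a \<in> TOC" and b: "b \<in> TOC" and ab: "a \<noteq> b"
    obtain i \<rho> where ia: "i \<in> {1..p}" "\<rho> \<in> R" "a = Code i \<rho>" using a unfolding TOC_def by auto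
    obtain i' \<rho>' where ib: "i' \<in> {1..p}" "\<rho>' \<in> R" "b = Code i' \<rho>'" using b unfolding TOC_def by auto
    show "a \<inter> b = {}"
    proof (rule ccontr)
      assume "a \<inter> b \<noteq> {}"
      then obtain x where "x \<in> a" "x \<in> b" by blast
      then have "i = i' \<and> \<rho> = \<rho>'" using Code_unique[OF ia(1) ib(1) ia(2) ib(2)] ia(3) ib(3) by blast
      then show False using ab ia ib by simp
    qed
  qed
  have E: "{} \<notin> TOC"
  proof
    assume "{} \<in> TOC"
    then obtain i \<rho> where "i \<in> {1..p}" "{} = Code i \<rho>" unfolding TOC_def by auto
    then show False using Code_is_code[of i \<rho>] unfolding is_code_def by simp
  qed
  have O: "\<forall>C\<in>TOC. optimal_code (g + 1) n (2 * w - 1) w C"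
    unfolding TOC_def optimal_code_def using Code_is_code Code_card Aq_val[OF a] by auto
  show ?thesis unfolding is_TOC_def partition_on_def using U Dj E O by blast
qed

end



lemma col_exists:
  assumes sc: "strong_coloring n w A" and AK: "A \<subseteq> Knw_edges n w" and w: "0 < w"
  shows "\<exists>col. \<forall>e\<in>A. bij_betw col e {0..<w}"
proof -
  obtain P where P: "partition_on {1..n} P" "card P = w" "\<forall>e\<in>A. \<forall>B\<in>P. card (e \<inter> B) \<le> 1"
    using sc unfolding strong_coloring_def by blast
  have finP: "finite P" using P(2) w by (metis card.infinite less_irrefl)
  obtain h where h: "bij_betw h P {0..<w}"
    using finite_same_card_bij[OF finP, of "{0..<w}"] P(2) by auto
  define cls where "cls v = (THE B. B \<in> P \<and> v \<in> B)" for v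
  have uq: "\<exists>!B. B \<in> P \<and> v \<in> B" if "v \<in> {1..n}" for v
  proof -
    have "v \<in> \<Union>P" using P(1) that unfolding partition_on_def by blast
    then obtain B where "B \<in> P" "v \<in> B" by blast
    moreover have "B' = B" if "B' \<in> P" "v \<in> B'" for B'
    proof (rule ccontr)
      assume "B' \<noteq> B"
      then have "B' \<inter> B = {}" using disjointD[OF partition_onD2[OF P(1)] that(1) \<open>B \<in> P\<close>] by simp
      then show False using that(2) \<open>v \<in> B\<close> by blast
    qed
    ultimately show ?thesis by blast
  qed
  have cls: "cls v \<in> P \<and> v \<in> cls v" if "v \<in> {1..n}" for v
    unfolding cls_def using theI'[OF uq[OF that]] .
  define col where "col v = h (cls v)" for v
  have "bij_betw col e {0..<w}" if e: "e \<in> A" for e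
  proof -
    have eK: "e \<subseteq> {1..n}" "card e = w" using AK e unfolding Knw_edges_def by auto
    have fe: "finite e" using eK(2) w by (metis card.infinite less_irrefl)
    have inj: "inj_on col e"
    proof (rule inj_onI)
      fix u v assume u: "u \<in> e" and v: "v \<in> e" and eq: "col u = col v"
      have cu: "cls u \<in> P" "u \<in> cls u" using cls eK u by blast+
      have cv: "cls v \<in> P" "v \<in> cls v" using cls eK v by blast+
      have "h (cls u) = h (cls v)" using eq unfolding col_def .
      then have "cls u = cls v" using h cu(1) cv(1) unfolding bij_betw_def by (meson inj_onD)
      then have "u \<in> e \<inter> cls u" "v \<in> e \<inter> cls u" using u v cu cv by auto
      moreover have "card (e \<inter> cls u) \<le> 1" using P(3) e cu by blast
      ultimately show "u = v" using fe by (metis card_le_Suc0_iff_eq finite_Int One_nat_def)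
    qed
    have sub: "col ` e \<subseteq> {0..<w}"
    proof
      fix c assume "c \<in> col ` e"
      then obtain v where v: "v \<in> e" "c = col v" by blast
      then have "cls v \<in> P" using cls eK by blast
      then show "c \<in> {0..<w}" using bij_betw_apply[OF h] v unfolding col_def by simp
    qed
    have "card (col ` e) = w" using card_image[OF inj] eK by simp
    then have "col ` e = {0..<w}" using sub by (intro card_subset_eq) auto
    then show ?thesis using inj unfolding bij_betw_def by blast
  qed
  then show ?thesis by blast
qed

theorem theorem3p4:
  fixes w n g :: nat
  assumes "0 < w" "0 < n" "0 < g" "w \<le> n"
    and "g * (n mod w) < w"
    and "(n div w) dvd (n choose w)"
    and "g dvd ((n choose w) div (n div w))"
    and "\<exists>F. g_star_good n w ((n choose w) div (n div w) div g) g F"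
    and "\<exists>M. is_OA w (2 * w - 1) g M"
  shows "\<exists>P. is_TOC (g + 1) n (2 * w - 1) w P"
proof -
  define p where "p = (n choose w) div (n div w) div g"
  obtain F where F: "g_star_good n w p g F" using assms(8) unfolding p_def by blast
  have arc: "almost_regular_coloring n w p g F" and
    pk: "\<forall>i\<in>{1..p}. is_packing (\<Union>j\<in>{1..g}. F i j) \<and> strong_coloring n w (\<Union>j\<in>{1..g}. F i j)"
    using F unfolding g_star_good_def by blast+
  have "\<forall>i\<in>{1..p}. \<exists>col. \<forall>e\<in>(\<Union>j\<in>{1..g}. F i j). bij_betw col e {0..<w}"
  proof
    fix i assume i: "i \<in> {1..p}"
    have U: "(\<Union>i\<in>{1..p}. \<Union>j\<in>{1..g}. F i j) = Knw_edges n w"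
      using arc unfolding almost_regular_coloring_def by (rule conjunct1)
    have "(\<Union>j\<in>{1..g}. F i j) \<subseteq> Knw_edges n w" unfolding U[symmetric] using i by blast
    then show "\<exists>col. \<forall>e\<in>(\<Union>j\<in>{1..g}. F i j). bij_betw col e {0..<w}"
      using col_exists[of n w "\<Union>j\<in>{1..g}. F i j"] pk i assms(1) by blast
  qed
  then obtain col where col: "\<forall>i\<in>{1..p}. \<forall>e\<in>(\<Union>j\<in>{1..g}. F i j). bij_betw (col i) e {0..<w}"
    by (rule bchoice[elim_format]) blast
  have colb: "\<forall>i\<in>{1..p}. \<forall>j\<in>{1..g}. \<forall>e\<in>F i j. bij_betw (col i) e {0..<w}"
    using col by blast
  have pack: "\<forall>i\<in>{1..p}. is_packing (\<Union>j\<in>{1..g}. F i j)" using pk by blast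
  interpret cons n w g p F col
    by (rule cons.intro[OF assms(1) assms(3) assms(4) arc pack colb])
  show ?thesis using TOC_ok[OF assms(5)] by (rule exI)
qed


end
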